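(* Let $j$ be an integer, let $[a,b]=[2^j,2^{j+1}]$, let $n>1$ be an integer, and let $s_1,\dots,s_n$ and $w_1,\dots,w_n$ be the nodes and weights of the $n$-point Gauss–Legendre quadrature on $[a,b]$. Then for $\beta\in(1,2)$ and every $t>0$, $$\left|\int_a^b e^{-ts}s^{\beta-1}\,ds-\sum_{k=1}^n w_k s_k^{\beta-1}e^{-s_k t}\right|<2^{\beta-\frac{3}{2}}\,\pi\, a^\beta\left(\frac{e^{1/e}}{4}\right)^{2n}.$$
   Context: The $n$-point Gauss–Legendre quadrature on $[a,b]$ is the quadrature rule $\int_a^b \phi(s)\,ds\approx\sum_{k=1}^n w_k\phi(s_k)$ that is exact for all polynomials of degree at most $2n-1$. *)

theory Defs
  imports "HOL-Analysis.Analysis" "HOL-Computational_Algebra.Polynomial"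
begin

definition gauss_legendre :: "real \<Rightarrow> real \<Rightarrow> nat \<Rightarrow> (nat \<Rightarrow> real) \<Rightarrow> (nat \<Rightarrow> real) \<Rightarrow> bool" where
  "gauss_legendre a b n s w \<longleftrightarrow>
     (\<forall>p :: real poly. degree p \<le> 2 * n - 1 \<longrightarrow>
        integral {a..b} (poly p) = (\<Sum>k = 1..n. w k * poly p (s k)))"

end

theory Submission
  imports Defs
begin

lemma pascal_sum:
  fixes A :: "nat \<Rightarrow> nat \<Rightarrow> real"
  shows "(\<Sum>i\<le>k. real (k choose i) * (A (Suc i) (k - i) + A i (Suc k - i)))
       = (\<Sum>i\<le>Suc k. real (Suc k choose i) * A i (Suc k - i))"
proof -
  have e1: "(\<Sum>i\<le>Suc k. real (Suc k choose i) * A i (Suc k - i))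
      = A 0 (Suc k) + (\<Sum>i\<le>k. real (Suc k choose Suc i) * A (Suc i) (k - i))"
    by (subst sum.atMost_Suc_shift) simp
  have e2: "(\<Sum>i\<le>k. real (Suc k choose Suc i) * A (Suc i) (k - i)) = (\<Sum>i\<le>k. real (k choose i) * A (Suc i) (k - i))
        + (\<Sum>i\<le>k. real (k choose Suc i) * A (Suc i) (Suc k - Suc i))"
    by (simp add: sum.distrib algebra_simps)
  have e3: "A 0 (Suc k) + (\<Sum>i\<le>k. real (k choose Suc i) * A (Suc i) (Suc k - Suc i))
       = (\<Sum>i\<le>Suc k. real (k choose i) * A i (Suc k - i))"
    by (subst sum.atMost_Suc_shift) simp
  have e4: "(\<Sum>i\<le>Suc k. real (k choose i) * A i (Suc k - i)) = (\<Sum>i\<le>k. real (k choose i) * A i (Suc k - i))"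
    by simp
  show ?thesis
    using e1 e2 e3 e4 by (simp add: sum.distrib algebra_simps)
qed

lemma leibniz_deriv:
  fixes u v :: "nat \<Rightarrow> real \<Rightarrow> real"
  assumes du: "\<And>j. (u j has_real_derivative u (Suc j) x) (at x)"
    and dv: "\<And>j. (v j has_real_derivative v (Suc j) x) (at x)"
  shows "((\<lambda>y. \<Sum>i\<le>k. real (k choose i) * u i y * v (k - i) y) has_real_derivative
          (\<Sum>i\<le>Suc k. real (Suc k choose i) * u i x * v (Suc k - i) x)) (at x)"
proof -
  have "((\<lambda>y. \<Sum>i\<le>k. real (k choose i) * u i y * v (k - i) y) has_real_derivative
          (\<Sum>i\<le>k. real (k choose i) * (u (Suc i) x * v (k - i) x + u i x * v (Suc (k - i)) x))) (at x)"
    apply (rule DERIV_sum)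
    apply (subst mult.assoc)
    apply (rule DERIV_cmult)
    apply (rule DERIV_mult'[OF du dv, THEN DERIV_cong])
    apply simp
    done
  moreover have "(\<Sum>i\<le>k. real (k choose i) * (u (Suc i) x * v (k - i) x + u i x * v (Suc (k - i)) x))
     = (\<Sum>i\<le>Suc k. real (Suc k choose i) * u i x * v (Suc k - i) x)"
  proof -
    have "(\<Sum>i\<le>k. real (k choose i) * (u (Suc i) x * v (k - i) x + u i x * v (Suc (k - i)) x))
       = (\<Sum>i\<le>k. real (k choose i) * ((\<lambda>a b. u a x * v b x) (Suc i) (k - i) + (\<lambda>a b. u a x * v b x) i (Suc k - i)))"
      by (intro sum.cong refl) (simp add: Suc_diff_le)
    also have "\<dots> = (\<Sum>i\<le>Suc k. real (Suc k choose i) * (\<lambda>a b. u a x * v b x) i (Suc k - i))"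
      by (rule pascal_sum)
    finally show ?thesis by (simp add: mult.assoc)
  qed
  ultimately show ?thesis by simp
qed

definition Pg :: "real \<Rightarrow> nat \<Rightarrow> real" where "Pg g j = (\<Prod>l<j. g - real l)"

definition Ff :: "real \<Rightarrow> real \<Rightarrow> nat \<Rightarrow> real \<Rightarrow> real" where
  "Ff t g k y = (\<Sum>i\<le>k. real (k choose i) * ((-t)^i * exp(-t*y)) * (Pg g (k-i) * y powr (g - real (k-i))))"

lemma Ff_0: "Ff t g 0 y = exp (-t*y) * y powr g"
  by (simp add: Ff_def Pg_def)

lemma Ff_deriv:
  assumes "y > 0"
  shows "(Ff t g k has_real_derivative Ff t g (Suc k) y) (at y)"
proof -
  have du: "((\<lambda>y. (-t)^j * exp(-t*y)) has_real_derivative (-t)^(Suc j) * exp(-t*y)) (at y)" for j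
    by (auto intro!: derivative_eq_intros)
  have dv: "((\<lambda>y. Pg g j * y powr (g - real j)) has_real_derivative Pg g (Suc j) * y powr (g - real (Suc j))) (at y)" for j
    using assms
    by (auto intro!: derivative_eq_intros has_real_derivative_powr[THEN DERIV_cong] simp: Pg_def algebra_simps)
  show ?thesis
    unfolding Ff_def
    using leibniz_deriv[of "\<lambda>j y. (-t)^j * exp(-t*y)" y "\<lambda>j y. Pg g j * y powr (g - real j)" k, OF du dv]
    by simp
qed

lemma Pg_bound:
  assumes "0 < g" "g < 1"
  shows "\<bar>Pg g j\<bar> \<le> fact j"
proof -
  have "\<bar>Pg g j\<bar> = (\<Prod>l<j. \<bar>g - real l\<bar>)" by (simp add: Pg_def abs_prod)
  also have "\<dots> \<le> (\<Prod>l<j. real (Suc l))"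
    by (rule prod_mono) (use assms in auto)
  also have "\<dots> = fact j" by (simp add: fact_prod_Suc atLeast0LessThan)
  finally show ?thesis .
qed

lemma exp_partial_le:
  assumes "x \<ge> 0"
  shows "(\<Sum>i\<le>k. x^i / fact i) \<le> exp (x::real)"
proof -
  have s: "(\<lambda>n. x^n / fact n) sums exp x"
    using exp_converges[of x] by (simp add: divide_inverse mult.commute)
  have "(\<Sum>i\<le>k. x^i / fact i) \<le> suminf (\<lambda>n. x^n / fact n)"
    by (rule sum_le_suminf) (use s assms in \<open>auto simp: sums_iff\<close>)
  with s show ?thesis by (simp add: sums_iff)
qed

lemma Ff_bound:
  assumes "0 < g" "g < 1" "t \<ge> 0" "y > 0"
  shows "\<bar>Ff t g k y\<bar> \<le> fact k * y powr (g - real k)"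
proof -
  have "\<bar>Ff t g k y\<bar> \<le> (\<Sum>i\<le>k. \<bar>real (k choose i) * ((-t)^i * exp(-t*y)) * (Pg g (k-i) * y powr (g - real (k-i)))\<bar>)"
    unfolding Ff_def by (rule sum_abs)
  also have "\<dots> \<le> (\<Sum>i\<le>k. fact k * y powr (g - real k) * exp(-t*y) * ((t*y)^i / fact i))"
  proof (rule sum_mono)
    fix i assume i: "i \<in> {..k}"
    then have ik: "i \<le> k" by simp
    have pw: "y powr (g - real (k-i)) = y powr (g - real k) * y^i"
      using ik assms by (simp add: of_nat_diff powr_add[symmetric] powr_realpow[symmetric] algebra_simps)
    have ch: "real (k choose i) * fact (k - i) = fact k / fact i"
      using ik by (simp add: binomial_fact)
    have "\<bar>real (k choose i) * ((-t)^i * exp(-t*y)) * (Pg g (k-i) * y powr (g - real (k-i)))\<bar>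
        = real (k choose i) * (t^i * exp(-t*y)) * (\<bar>Pg g (k-i)\<bar> * (y powr (g - real k) * y^i))"
      using assms pw by (simp add: abs_mult power_abs)
    also have "\<dots> \<le> real (k choose i) * (t^i * exp(-t*y)) * (fact (k-i) * (y powr (g - real k) * y^i))"
      by (intro mult_left_mono mult_right_mono Pg_bound) (use assms in auto)
    also have "\<dots> = (real (k choose i) * fact (k-i)) * y powr (g - real k) * exp(-t*y) * (t*y)^i"
      by (simp add: power_mult_distrib algebra_simps)
    also have "\<dots> = fact k * y powr (g - real k) * exp(-t*y) * ((t*y)^i / fact i)"
      by (simp add: ch)
    finally show "\<bar>real (k choose i) * ((-t)^i * exp(-t*y)) * (Pg g (k-i) * y powr (g - real (k-i)))\<bar>
        \<le> fact k * y powr (g - real k) * exp(-t*y) * ((t*y)^i / fact i)" .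
  qed
  also have "\<dots> = fact k * y powr (g - real k) * exp(-t*y) * (\<Sum>i\<le>k. (t*y)^i / fact i)"
    by (simp add: sum_distrib_left)
  also have "\<dots> \<le> fact k * y powr (g - real k) * exp(-t*y) * exp (t*y)"
    by (intro mult_left_mono exp_partial_le) (use assms in auto)
  also have "\<dots> = fact k * y powr (g - real k)"
    by (simp add: mult.assoc exp_add[symmetric])
  finally show ?thesis .
qed

lemma rolle_step_aux:
  fixes g g' :: "real \<Rightarrow> real"
  assumes der: "\<forall>x\<in>{a..b}. (g has_real_derivative g' x) (at x)"
  shows "finite Z \<Longrightarrow> card Z = Suc k \<Longrightarrow> Z \<subseteq> {a..b} \<Longrightarrow> (\<forall>z\<in>Z. g z = 0) \<Longrightarrow>
    \<exists>Z'. finite Z' \<and> card Z' = k \<and> Z' \<subseteq> {Min Z..Max Z} \<and> (\<forall>z\<in>Z'. g' z = 0)"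
proof (induction k arbitrary: Z)
  case 0
  then show ?case by (intro exI[of _ "{}"]) auto
next
  case (Suc k)
  define M where "M = Max Z"
  define Z0 where "Z0 = Z - {M}"
  have ne: "Z \<noteq> {}" using Suc.prems by auto
  have MZ: "M \<in> Z" unfolding M_def using Suc.prems ne by auto
  have cZ0: "card Z0 = Suc k" unfolding Z0_def using Suc.prems MZ by simp
  have fZ0: "finite Z0" unfolding Z0_def using Suc.prems by simp
  have neZ0: "Z0 \<noteq> {}" using cZ0 by auto
  obtain Z0' where Z0': "finite Z0'" "card Z0' = k" "Z0' \<subseteq> {Min Z0..Max Z0}" "\<forall>z\<in>Z0'. g' z = 0"
    using Suc.IH[OF fZ0 cZ0] Suc.prems unfolding Z0_def by auto
  define M0 where "M0 = Max Z0"
  have M0Z0: "M0 \<in> Z0" unfolding M0_def using fZ0 neZ0 by auto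
  have M0lt: "M0 < M"
  proof -
    have "M0 \<in> Z" "M0 \<noteq> M" using M0Z0 unfolding Z0_def by auto
    moreover have "M0 \<le> M" unfolding M_def using \<open>M0 \<in> Z\<close> Suc.prems by auto
    ultimately show ?thesis by auto
  qed
  have sub: "{M0..M} \<subseteq> {a..b}" using M0Z0 MZ Suc.prems(3) unfolding Z0_def by auto
  have "\<exists>z. M0 < z \<and> z < M \<and> DERIV g z :> 0"
  proof (rule Rolle[OF M0lt])
    show "g M0 = g M" using M0Z0 MZ Suc.prems(4) unfolding Z0_def by auto
    show "continuous_on {M0..M} g"
      by (rule continuous_at_imp_continuous_on) (use der sub in \<open>blast intro: DERIV_isCont\<close>)
    show "g differentiable (at x)" if "M0 < x" "x < M" for x
      unfolding real_differentiable_def using der sub that by auto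
  qed
  then obtain \<xi> where xi: "M0 < \<xi>" "\<xi> < M" "DERIV g \<xi> :> 0" by blast
  have "g' \<xi> = 0"
    using der sub xi DERIV_unique[OF xi(3)] by force
  have MinZ: "Min Z \<le> Min Z0"
    using fZ0 neZ0 Suc.prems unfolding Z0_def by (auto intro: Min_antimono)
  have Z0'sub: "Z0' \<subseteq> {Min Z..M0}" using Z0'(3) MinZ unfolding M0_def by auto
  have "\<xi> \<notin> Z0'" using Z0'sub xi by auto
  moreover have "Min Z \<le> M0" using Z0'sub MinZ M0Z0 fZ0 unfolding M0_def
    by (meson Min_le dual_order.trans)
  ultimately show ?case
    using Z0' Z0'sub xi \<open>g' \<xi> = 0\<close>
    by (intro exI[of _ "insert \<xi> Z0'"]) (auto simp: M_def)
qed

lemma rolle_iter: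
  fixes D :: "nat \<Rightarrow> real \<Rightarrow> real"
  assumes der: "\<forall>k<m. \<forall>x\<in>{a..b}. (D k has_real_derivative D (Suc k) x) (at x)"
    and Z: "finite Z" "card Z = Suc m" "Z \<subseteq> {a..b}" "\<forall>z\<in>Z. D 0 z = 0"
  shows "\<exists>\<xi>\<in>{a..b}. D m \<xi> = 0"
proof -
  have "j \<le> m \<Longrightarrow> \<exists>Z. finite Z \<and> card Z = Suc m - j \<and> Z \<subseteq> {a..b} \<and> (\<forall>z\<in>Z. D j z = 0)" for j
  proof (induction j)
    case 0 then show ?case using Z by auto
  next
    case (Suc j)
    then obtain Zj where Zj: "finite Zj" "card Zj = Suc (m - j)" "Zj \<subseteq> {a..b}" "\<forall>z\<in>Zj. D j z = 0"
      by (auto simp: Suc_diff_le)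
    obtain Z' where Z': "finite Z'" "card Z' = m - j" "Z' \<subseteq> {Min Zj..Max Zj}" "\<forall>z\<in>Z'. D (Suc j) z = 0"
      using rolle_step_aux[of a b "D j" "D (Suc j)", OF _ Zj] der Suc.prems by auto
    have "{Min Zj..Max Zj} \<subseteq> {a..b}"
    proof -
      have "Zj \<noteq> {}" using Zj(2) by auto
      then have "Min Zj \<in> Zj" "Max Zj \<in> Zj" using Zj(1) by auto
      then show ?thesis using Zj(3) by auto
    qed
    then show ?case using Z' by (intro exI[of _ Z']) auto
  qed
  from this[of m] obtain Zm where "finite Zm" "card Zm = 1" "Zm \<subseteq> {a..b}" "\<forall>z\<in>Zm. D m z = 0" by auto
  then show ?thesis by (metis One_nat_def card_1_singletonE insert_subset singletonI)
qed

lemma pderiv_iter_coeff: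
  fixes p :: "real poly"
  shows "coeff ((pderiv^^k) p) i = coeff p (i+k) * (fact (i+k) / fact i)"
proof (induction k arbitrary: i)
  case 0 then show ?case by simp
next
  case (Suc k)
  have "coeff ((pderiv^^Suc k) p) i = real (Suc i) * coeff ((pderiv^^k) p) (Suc i)"
    by (simp add: coeff_pderiv)
  also have "\<dots> = real (Suc i) * (coeff p (Suc i + k) * (fact (Suc i + k) / fact (Suc i)))"
    by (simp add: Suc.IH)
  also have "\<dots> = coeff p (i + Suc k) * (fact (i + Suc k) / fact i)"
  proof -
    have f: "(fact (Suc i) :: real) = real (Suc i) * fact i" by simp
    have "Suc i + k = i + Suc k" by simp
    then show ?thesis unfolding f by (simp add: field_simps del: of_nat_Suc)
  qed
  finally show ?case .
qed

lemma pderiv_iter_small: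
  fixes p :: "real poly"
  assumes "degree p < k"
  shows "(pderiv^^k) p = 0"
  by (rule poly_eqI) (use assms in \<open>simp add: pderiv_iter_coeff coeff_eq_0\<close>)

lemma pderiv_iter_exact:
  fixes p :: "real poly"
  assumes "degree p = k"
  shows "poly ((pderiv^^k) p) y = lead_coeff p * fact k"
proof -
  have "(pderiv^^k) p = [:lead_coeff p * fact k:]"
  proof (rule poly_eqI)
    fix i show "coeff ((pderiv^^k) p) i = coeff [:lead_coeff p * fact k:] i"
      using assms by (cases i) (simp_all add: pderiv_iter_coeff coeff_eq_0)
  qed
  then show ?thesis by simp
qed

definition lag :: "real set \<Rightarrow> (real \<Rightarrow> real) \<Rightarrow> real poly" where
  "lag X g = (\<Sum>x\<in>X. smult (g x / (\<Prod>z\<in>X-{x}. x - z)) (\<Prod>z\<in>X-{x}. [:-z,1:]))"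

lemma lag_interp:
  assumes "finite X" "x0 \<in> X"
  shows "poly (lag X g) x0 = g x0"
proof -
  have "poly (lag X g) x0 = (\<Sum>x\<in>X. g x / (\<Prod>z\<in>X-{x}. x - z) * (\<Prod>z\<in>X-{x}. x0 - z))"
    by (simp add: lag_def poly_sum poly_prod)
  also have "\<dots> = g x0 / (\<Prod>z\<in>X-{x0}. x0 - z) * (\<Prod>z\<in>X-{x0}. x0 - z)"
  proof (rule sum.remove[OF assms(1,2), THEN trans])
    have "(\<Prod>z\<in>X-{x}. x0 - z) = 0" if "x \<in> X - {x0}" for x
      using that assms by (intro prod_zero) auto
    then show "g x0 / (\<Prod>z\<in>X-{x0}. x0 - z) * (\<Prod>z\<in>X-{x0}. x0 - z) +
      (\<Sum>x\<in>X - {x0}. g x / (\<Prod>z\<in>X-{x}. x - z) * (\<Prod>z\<in>X-{x}. x0 - z)) =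
      g x0 / (\<Prod>z\<in>X-{x0}. x0 - z) * (\<Prod>z\<in>X-{x0}. x0 - z)" by simp
  qed
  also have "\<dots> = g x0"
  proof -
    have "(\<Prod>z\<in>X-{x0}. x0 - z) \<noteq> 0" using assms by auto
    then show ?thesis by simp
  qed
  finally show ?thesis .
qed

lemma lag_degree:
  assumes "finite X"
  shows "degree (lag X g) \<le> card X - 1"
  unfolding lag_def
proof (rule degree_sum_le[OF assms])
  fix x assume x: "x \<in> X"
  have "degree (smult (g x / (\<Prod>z\<in>X-{x}. x - z)) (\<Prod>z\<in>X-{x}. [:-z,1:])) \<le> degree (\<Prod>z\<in>X-{x}. [:-z,1::real:])"
    by (rule degree_smult_le)
  also have "\<dots> \<le> sum (degree \<circ> (\<lambda>z. [:-z,1::real:])) (X-{x})"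
    by (rule degree_prod_sum_le) (use assms in auto)
  also have "\<dots> = card X - 1" using assms x by simp
  finally show "degree (smult (g x / (\<Prod>z\<in>X-{x}. x - z)) (\<Prod>z\<in>X-{x}. [:-z,1:])) \<le> card X - 1" .
qed

lemma interp_error:
  fixes F :: "nat \<Rightarrow> real \<Rightarrow> real" and W :: "real poly"
  assumes der: "\<forall>k<m. \<forall>x\<in>{a..b}. (F k has_real_derivative F (Suc k) x) (at x)"
   and X: "finite X" "card X = m" "X \<subseteq> {a..b}" "m > 0"
   and W: "degree W = m" "\<forall>x\<in>X. poly W x = 0"
   and bnd: "\<forall>y\<in>{a..b}. \<bar>F m y\<bar> \<le> B"
   and x: "x \<in> {a..b}"
  shows "\<bar>F 0 x - poly (lag X (F 0)) x\<bar> \<le> B / (\<bar>lead_coeff W\<bar> * fact m) * \<bar>poly W x\<bar>"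
proof (cases "x \<in> X")
  case True
  have "B \<ge> 0" using bnd x by (meson abs_ge_zero order_trans)
  then show ?thesis using True X by (simp add: lag_interp)
next
  case False
  define P where "P = lag X (F 0)"
  have W0: "W \<noteq> 0" using W X by auto
  have Wx: "poly W x \<noteq> 0"
  proof
    assume "poly W x = 0"
    then have "insert x X \<subseteq> {y. poly W y = 0}" using W by auto
    then have "card (insert x X) \<le> card {y. poly W y = 0}"
      using poly_roots_finite[OF W0] by (rule card_mono[rotated])
    also have "\<dots> \<le> m" using card_poly_roots_bound[OF W0] W by simp
    finally show False using False X by simp
  qed
  define K where "K = (F 0 x - poly P x) / poly W x"
  define D where "D k y = F k y - poly ((pderiv^^k) P) y - K * poly ((pderiv^^k) W) y" for k y
  have derD: "\<forall>k<m. \<forall>y\<in>{a..b}. (D k has_real_derivative D (Suc k) y) (at y)"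
  proof (intro allI impI ballI)
    fix k y assume "k < m" "y \<in> {a..b}"
    then have "(F k has_real_derivative F (Suc k) y) (at y)" using der by auto
    then show "(D k has_real_derivative D (Suc k) y) (at y)"
      unfolding D_def[abs_def]
      by (auto intro!: derivative_eq_intros poly_DERIV)
  qed
  have Z: "finite (insert x X)" "card (insert x X) = Suc m" "insert x X \<subseteq> {a..b}" "\<forall>z\<in>insert x X. D 0 z = 0"
    using X False x Wx W by (auto simp: D_def K_def P_def lag_interp)
  obtain \<xi> where xi: "\<xi> \<in> {a..b}" "D m \<xi> = 0" using rolle_iter[OF derD Z] by blast
  have dP: "degree P < m" using lag_degree[OF X(1), of "F 0"] X unfolding P_def by linarith
  have "F m \<xi> = K * (lead_coeff W * fact m)"
    using xi(2) unfolding D_def by (simp add: pderiv_iter_small[OF dP] pderiv_iter_exact[OF W(1)])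
  then have "\<bar>K\<bar> = \<bar>F m \<xi>\<bar> / (\<bar>lead_coeff W\<bar> * fact m)"
    using W0 by (simp add: abs_mult field_simps)
  also have "\<dots> \<le> B / (\<bar>lead_coeff W\<bar> * fact m)"
    using bnd xi(1) W0 by (intro divide_right_mono) auto
  finally have "\<bar>K\<bar> * \<bar>poly W x\<bar> \<le> B / (\<bar>lead_coeff W\<bar> * fact m) * \<bar>poly W x\<bar>"
    by (rule mult_right_mono) simp
  moreover have "\<bar>F 0 x - poly P x\<bar> = \<bar>K\<bar> * \<bar>poly W x\<bar>"
  proof -
    have "K * poly W x = F 0 x - poly P x" using Wx by (simp add: K_def)
    then show ?thesis by (metis abs_mult)
  qed
  ultimately show ?thesis by (simp add: P_def)
qed

fun cheb :: "nat \<Rightarrow> real poly" where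
  "cheb 0 = 1"
| "cheb (Suc 0) = [:0,1:]"
| "cheb (Suc (Suc k)) = pCons 0 (smult 2 (cheb (Suc k))) - cheb k"

lemma cheb_cos: "poly (cheb k) (cos \<theta>) = cos (real k * \<theta>)"
proof (induction k rule: cheb.induct)
  case 1 then show ?case by simp
next
  case 2 then show ?case by simp
next
  case (3 k)
  have e1: "cos (real (Suc (Suc k)) * \<theta>) = cos (real (Suc k) * \<theta> + \<theta>)"
    by (simp add: algebra_simps)
  have e2: "cos (real k * \<theta>) = cos (real (Suc k) * \<theta> - \<theta>)"
    by (simp add: algebra_simps)
  show ?case
    using 3 by (simp only: cheb.simps poly_pCons poly_smult poly_diff e1 e2 cos_add cos_diff)
      (simp add: algebra_simps)
qed

lemma cheb_deg_coeff: "degree (cheb k) \<le> k \<and> coeff (cheb k) k = (if k = 0 then 1 else 2^(k-1))"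
proof (induction k rule: cheb.induct)
  case 1 then show ?case by simp
next
  case 2 then show ?case by simp
next
  case (3 k)
  have d1: "degree (pCons 0 (smult 2 (cheb (Suc k)))) \<le> Suc (Suc k)"
    using 3 by (metis Suc_le_mono degree_pCons_le degree_smult_le le_trans)
  have d: "degree (cheb (Suc (Suc k))) \<le> Suc (Suc k)"
    using d1 3 by (simp add: degree_diff_le)
  have c0: "coeff (cheb k) (Suc (Suc k)) = 0"
    using 3 by (intro coeff_eq_0) auto
  have "coeff (cheb (Suc (Suc k))) (Suc (Suc k)) = 2 * 2^k"
    using 3 c0 by simp
  then show ?case using d by simp
qed

lemma cheb_degree: "degree (cheb k) = k"
proof -
  have "coeff (cheb k) k \<noteq> 0" using cheb_deg_coeff[of k] by auto
  then have "k \<le> degree (cheb k)" by (rule le_degree)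
  then show ?thesis using cheb_deg_coeff[of k] by simp
qed

lemma cheb_coeff: "k > 0 \<Longrightarrow> coeff (cheb k) k = 2^(k-1)"
  using cheb_deg_coeff[of k] by auto

lemma cheb_lead: "k > 0 \<Longrightarrow> lead_coeff (cheb k) = 2^(k-1)"
  by (simp add: cheb_degree cheb_coeff)

lemma cheb_bound:
  assumes "-1 \<le> u" "u \<le> 1"
  shows "\<bar>poly (cheb k) u\<bar> \<le> 1"
proof -
  have "poly (cheb k) u = poly (cheb k) (cos (arccos u))" using assms by simp
  also have "\<dots> = cos (real k * arccos u)" by (rule cheb_cos)
  finally show ?thesis by simp
qed

lemma cheb_zero:
  assumes "m > 0"
  shows "poly (cheb m) (cos (real (2*i+1) * pi / (2 * real m))) = 0"
proof -
  have "real m * (real (2*i+1) * pi / (2 * real m)) = real (2*i+1) * (pi/2)"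
    using assms by (simp add: field_simps)
  moreover have "cos (real (2*i+1) * (pi/2)) = 0"
    unfolding cos_zero_iff by (intro disjI1 exI[of _ "2*i+1"]) simp
  ultimately show ?thesis
    by (simp only: cheb_cos)
qed

definition chebW :: "real \<Rightarrow> real \<Rightarrow> nat \<Rightarrow> real poly" where
  "chebW a b m = pcompose (cheb m) [:-(a+b)/(b-a), 2/(b-a):]"

definition chebX :: "real \<Rightarrow> real \<Rightarrow> nat \<Rightarrow> real set" where
  "chebX a b m = (\<lambda>i. (a+b)/2 + (b-a)/2 * cos (real (2*i+1) * pi / (2 * real m))) ` {..<m}"

lemma chebW_poly: "poly (chebW a b m) y = poly (cheb m) ((2*y - (a+b))/(b-a))"
proof -
  have "-(a+b)/(b-a) + y * (2/(b-a)) = (2*y - (a+b))/(b-a)"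
    by (simp add: diff_divide_distrib add_divide_distrib algebra_simps)
  then show ?thesis by (simp add: chebW_def poly_pcompose)
qed

lemma chebW_degree: "a < b \<Longrightarrow> degree (chebW a b m) = m"
  by (simp add: chebW_def degree_pcompose cheb_degree)

lemma chebW_lead: "a < b \<Longrightarrow> m > 0 \<Longrightarrow> lead_coeff (chebW a b m) = 2^(m-1) * (2/(b-a))^m"
  unfolding chebW_def by (subst lead_coeff_comp) (simp_all add: cheb_coeff cheb_degree)

lemma chebW_bound: "a < b \<Longrightarrow> y \<in> {a..b} \<Longrightarrow> \<bar>poly (chebW a b m) y\<bar> \<le> 1"
  unfolding chebW_poly by (rule cheb_bound) (auto simp: field_simps)

lemma chebX_props:
  assumes "a < b" "m > 0"
  shows "finite (chebX a b m)" "card (chebX a b m) = m" "chebX a b m \<subseteq> {a..b}"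
    "\<forall>x\<in>chebX a b m. poly (chebW a b m) x = 0"
proof -
  define \<theta> where "\<theta> i = real (2*i+1) * pi / (2 * real m)" for i
  have th: "0 \<le> \<theta> i \<and> \<theta> i \<le> pi" if "i < m" for i
  proof -
    have "real (2*i+1) \<le> 2 * real m" using that by linarith
    then have "real (2*i+1) * pi \<le> (2 * real m) * pi" by (rule mult_right_mono) simp
    then have "real (2*i+1) * pi / (2 * real m) \<le> (2 * real m) * pi / (2 * real m)"
      by (rule divide_right_mono) simp
    also have "\<dots> = pi" using assms by simp
    finally have "\<theta> i \<le> pi" unfolding \<theta>_def .
    moreover have "0 \<le> \<theta> i" unfolding \<theta>_def by simp
    ultimately show ?thesis by simp
  qed
  have inj: "inj_on (\<lambda>i. (a+b)/2 + (b-a)/2 * cos (\<theta> i)) {..<m}"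
  proof (rule inj_onI)
    fix i j assume ij: "i \<in> {..<m}" "j \<in> {..<m}" "(a+b)/2 + (b-a)/2 * cos (\<theta> i) = (a+b)/2 + (b-a)/2 * cos (\<theta> j)"
    then have "(b-a)/2 * cos (\<theta> i) = (b-a)/2 * cos (\<theta> j)" by (simp only: add_left_cancel)
    moreover have "(b-a)/2 \<noteq> 0" using assms by simp
    ultimately have "cos (\<theta> i) = cos (\<theta> j)" by (metis mult_left_cancel)
    then have "\<theta> i = \<theta> j" using th ij by (intro cos_inj_pi[of "\<theta> i" "\<theta> j"]) (auto simp del: cos_inj_pi)
    then have "real (2*i+1) * pi = real (2*j+1) * pi" using assms by (simp add: \<theta>_def)
    then show "i = j" by simp
  qed
  show "finite (chebX a b m)" by (simp add: chebX_def)
  show "card (chebX a b m) = m" using card_image[OF inj] by (simp add: chebX_def \<theta>_def)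
  show "chebX a b m \<subseteq> {a..b}"
  proof
    fix x assume "x \<in> chebX a b m"
    then obtain i where x: "x = (a+b)/2 + (b-a)/2 * cos (\<theta> i)" by (auto simp: chebX_def \<theta>_def)
    have "\<bar>cos (\<theta> i)\<bar> \<le> 1" by simp
    then have "(b-a)/2 * \<bar>cos (\<theta> i)\<bar> \<le> (b-a)/2 * 1" by (rule mult_left_mono) (use assms in simp)
    then have "\<bar>(b-a)/2 * cos (\<theta> i)\<bar> \<le> (b-a)/2" using assms by (simp add: abs_mult)
    then have h1: "(b-a)/2 * cos (\<theta> i) \<le> (b-a)/2" and h2: "-((b-a)/2 * cos (\<theta> i)) \<le> (b-a)/2"
      by (auto dest: abs_le_D1 abs_le_D2)
    have lem: "a \<le> (a+b)/2 + d \<and> (a+b)/2 + d \<le> b" if "d \<le> (b-a)/2" "-d \<le> (b-a)/2" for d :: real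
      using that by (simp add: field_simps)
    have "a \<le> x" "x \<le> b" using lem[OF h1 h2] x by auto
    then show "x \<in> {a..b}" by simp
  qed
  show "\<forall>x\<in>chebX a b m. poly (chebW a b m) x = 0"
  proof
    fix x assume "x \<in> chebX a b m"
    then obtain i where x: "x = (a+b)/2 + (b-a)/2 * cos (\<theta> i)" by (auto simp: chebX_def \<theta>_def)
    have "2*x - (a+b) = (b-a) * cos (\<theta> i)" unfolding x by (simp add: field_simps)
    then have "(2*x - (a+b))/(b-a) = cos (\<theta> i)" using assms by simp
    then show "poly (chebW a b m) x = 0"
      using cheb_zero[OF assms(2)] by (simp add: chebW_poly \<theta>_def)
  qed
qed

lemma poly_int_pos:
  fixes p :: "real poly"
  assumes "a < b" "p \<noteq> 0" "\<forall>x\<in>{a..b}. poly p x \<ge> 0"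
  shows "integral {a..b} (poly p) > 0"
proof -
  have cont: "continuous_on {a..b} (poly p)" by (intro continuous_intros)
  have int: "poly p integrable_on {a..b}" using cont integrable_continuous_real by blast
  have ge: "integral {a..b} (poly p) \<ge> 0"
    using assms(3) int by (intro integral_nonneg) auto
  show ?thesis
  proof (rule ccontr)
    assume "\<not> ?thesis"
    then have z: "integral {a..b} (poly p) = 0" using ge by simp
    have hi: "(poly p has_integral 0) (cbox a b)"
      using int z by (metis box_real(2) has_integral_integral)
    have "\<forall>x\<in>{a..b}. poly p x = 0"
    proof
      fix x assume x: "x \<in> {a..b}"
      show "poly p x = 0"
        apply (rule has_integral_0_cbox_imp_0[of a b "poly p"])
        using cont assms x hi by (auto simp: box_real)
    qed
    then have "{a..b} \<subseteq> {x. poly p x = 0}" by auto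
    moreover have "infinite {a..b}" using assms(1) by (simp add: infinite_Icc)
    ultimately show False using poly_roots_finite[OF assms(2)] finite_subset by blast
  qed
qed

definition Qp :: "nat \<Rightarrow> (nat \<Rightarrow> real) \<Rightarrow> nat \<Rightarrow> real poly" where
  "Qp n s k = (\<Prod>i\<in>{1..n}-{k}. [:-s i, 1:]^2)"

lemma Qp_poly: "poly (Qp n s k) x = (\<Prod>i\<in>{1..n}-{k}. (x - s i)^2)"
  by (simp add: Qp_def poly_prod)

lemma Qp_nonneg: "poly (Qp n s k) x \<ge> 0"
  unfolding Qp_poly by (intro prod_nonneg) auto

lemma Qp_nz: "Qp n s k \<noteq> 0"
  unfolding Qp_def by (subst prod_zero_iff) auto

lemma Qp_degree: "k \<in> {1..n} \<Longrightarrow> degree (Qp n s k) \<le> 2 * (n - 1)"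
proof -
  assume k: "k \<in> {1..n}"
  have "degree (Qp n s k) \<le> sum (degree \<circ> (\<lambda>i. [:-s i, 1:]^2)) ({1..n}-{k})"
    unfolding Qp_def by (rule degree_prod_sum_le) auto
  also have "\<dots> \<le> sum (\<lambda>i. 2) ({1..n}-{k})"
  proof (rule sum_mono)
    fix i show "(degree \<circ> (\<lambda>i. [:-s i, 1::real:]^2)) i \<le> 2"
      using degree_power_le[of "[:-s i, 1::real:]" 2] by simp
  qed
  also have "\<dots> = 2 * (n - 1)" using k by simp
  finally show ?thesis .
qed

lemma Qp_at_other: "i \<in> {1..n} \<Longrightarrow> i \<noteq> k \<Longrightarrow> poly (Qp n s k) (s i) = 0"
  unfolding Qp_poly by (rule prod_zero) auto

lemma gl_exact:
  assumes "gauss_legendre a b n s w" "degree p \<le> 2 * n - 1"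
  shows "integral {a..b} (poly p) = (\<Sum>k = 1..n. w k * poly p (s k))"
  using assms unfolding gauss_legendre_def by blast

lemma gl_weight_pos:
  assumes gl: "gauss_legendre a b n s w" and ab: "a < b" and k: "k \<in> {1..n}"
  shows "w k > 0"
proof -
  have deg: "degree (Qp n s k) \<le> 2 * n - 1" using Qp_degree[OF k, of s] by linarith
  have "integral {a..b} (poly (Qp n s k)) = (\<Sum>i = 1..n. w i * poly (Qp n s k) (s i))"
    by (rule gl_exact[OF gl deg])
  also have "\<dots> = w k * poly (Qp n s k) (s k)"
    using k by (intro sum.remove[THEN trans]) (auto simp: Qp_at_other)
  finally have e: "integral {a..b} (poly (Qp n s k)) = w k * poly (Qp n s k) (s k)" .
  have "integral {a..b} (poly (Qp n s k)) > 0"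
    using ab Qp_nz Qp_nonneg by (intro poly_int_pos) auto
  then have "w k * poly (Qp n s k) (s k) > 0" using e by simp
  then show ?thesis using Qp_nonneg[of n s k "s k"] by (simp add: zero_less_mult_iff)
qed

lemma gl_node_in:
  assumes gl: "gauss_legendre a b n s w" and ab: "a < b" and k: "k \<in> {1..n}"
  shows "s k \<in> {a..b}"
proof (rule ccontr)
  assume out: "s k \<notin> {a..b}"
  define R where "R = [:-s k, 1:] * Qp n s k"
  have Rnz: "R \<noteq> 0" unfolding R_def using Qp_nz[of n s k] by (metis mult_eq_0_iff pCons_eq_0_iff zero_neq_one)
  have degR: "degree R \<le> 2 * n - 1"
  proof -
    have "degree R \<le> degree [:-s k, 1:] + degree (Qp n s k)" unfolding R_def by (rule degree_mult_le)
    also have "\<dots> \<le> 1 + 2 * (n - 1)" using Qp_degree[OF k, of s] by simp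
    moreover have "1 + 2 * (n - 1) = 2 * n - 1" using k by auto
    ultimately show ?thesis by simp
  qed
  have "integral {a..b} (poly R) = (\<Sum>i = 1..n. w i * poly R (s i))"
    by (rule gl_exact[OF gl degR])
  also have "\<dots> = 0"
  proof (rule sum.neutral, rule ballI)
    fix i assume "i \<in> {1..n}"
    then show "w i * poly R (s i) = 0"
      by (cases "i = k") (auto simp: R_def Qp_at_other)
  qed
  finally have z: "integral {a..b} (poly R) = 0" .
  have pR: "poly R x = (x - s k) * poly (Qp n s k) x" for x by (simp add: R_def algebra_simps)
  show False
  proof (cases "s k < a")
    case True
    have "integral {a..b} (poly R) > 0"
      using ab Rnz True by (intro poly_int_pos) (auto simp: pR intro!: mult_nonneg_nonneg Qp_nonneg)
    then show False using z by simp
  next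
    case False
    then have "s k > b" using out by auto
    have "integral {a..b} (poly (-R)) > 0"
      using ab Rnz \<open>s k > b\<close> by (intro poly_int_pos) (auto simp: pR intro!: mult_nonpos_nonneg Qp_nonneg)
    moreover have "integral {a..b} (poly (-R)) = - integral {a..b} (poly R)"
    proof -
      have "poly (-R) = (\<lambda>x. - poly R x)" by (rule ext) simp
      moreover have "poly R integrable_on {a..b}"
        by (intro integrable_continuous_real continuous_intros)
      ultimately show ?thesis by (simp add: integral_neg)
    qed
    ultimately show False using z by simp
  qed
qed

lemma gl_weight_sum:
  assumes gl: "gauss_legendre a b n s w" and ab: "a < b" and n: "n \<ge> 1"
  shows "(\<Sum>k = 1..n. w k) = b - a"
proof -
  have "integral {a..b} (poly 1) = (\<Sum>k = 1..n. w k * poly 1 (s k))"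
    by (rule gl_exact[OF gl]) simp
  moreover have "poly (1::real poly) = (\<lambda>_. 1)" by (rule ext) simp
  ultimately show ?thesis using ab by simp
qed

lemma core:
  assumes a: "a > 0" and b: "b = 2*a" and n: "n > 1" and gl: "gauss_legendre a b n s w"
   and g: "0 < g" "g < 1" and t: "t > 0"
  shows "\<bar>integral {a..b} (Ff t g 0) - (\<Sum>k=1..n. w k * Ff t g 0 (s k))\<bar>
     \<le> 2 * (b - a) * (a powr (g - real (2*n)) / (2^(2*n-1) * (2/(b-a))^(2*n)))"
proof -
  define m where "m = 2*n"
  have ab: "a < b" using a b by simp
  have m0: "m > 0" using n m_def by simp
  define X where "X = chebX a b m"
  define W where "W = chebW a b m"
  define P where "P = lag X (Ff t g 0)"
  note Xp = chebX_props[OF ab m0, folded X_def W_def]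
  have der: "\<forall>k<m. \<forall>x\<in>{a..b}. (Ff t g k has_real_derivative Ff t g (Suc k) x) (at x)"
    using a by (auto intro!: Ff_deriv)
  have bnd: "\<forall>y\<in>{a..b}. \<bar>Ff t g m y\<bar> \<le> fact m * a powr (g - real m)"
  proof
    fix y assume y: "y \<in> {a..b}"
    have "\<bar>Ff t g m y\<bar> \<le> fact m * y powr (g - real m)"
      using y a g t by (intro Ff_bound) auto
    also have "\<dots> \<le> fact m * a powr (g - real m)"
      using y a g m0 by (intro mult_left_mono powr_mono2') auto
    finally show "\<bar>Ff t g m y\<bar> \<le> fact m * a powr (g - real m)" .
  qed
  define E0 where "E0 = a powr (g - real m) / (2^(m-1) * (2/(b-a))^m)"
  have E0nn: "E0 \<ge> 0" unfolding E0_def using ab by simp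
  have lead: "\<bar>lead_coeff W\<bar> = 2^(m-1) * (2/(b-a))^m"
    unfolding W_def using chebW_lead[OF ab m0] ab by simp
  have err: "\<bar>Ff t g 0 x - poly P x\<bar> \<le> E0" if x: "x \<in> {a..b}" for x
  proof -
    have "\<bar>Ff t g 0 x - poly P x\<bar> \<le> fact m * a powr (g - real m) / (\<bar>lead_coeff W\<bar> * fact m) * \<bar>poly W x\<bar>"
      unfolding P_def
      by (rule interp_error[OF der Xp(1,2,3) m0 _ Xp(4) bnd x]) (use ab in \<open>simp add: W_def chebW_degree\<close>)
    also have "\<dots> \<le> fact m * a powr (g - real m) / (\<bar>lead_coeff W\<bar> * fact m) * 1"
      by (intro mult_left_mono) (use chebW_bound[OF ab x] in \<open>auto simp: W_def\<close>)
    also have "\<dots> = E0" unfolding E0_def lead by simp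
    finally show ?thesis .
  qed
  have degP: "degree P \<le> 2 * n - 1"
    using lag_degree[OF Xp(1), of "Ff t g 0"] Xp(2) unfolding P_def m_def by simp
  have exact: "integral {a..b} (poly P) = (\<Sum>k=1..n. w k * poly P (s k))"
    by (rule gl_exact[OF gl degP])
  have contF: "continuous_on {a..b} (Ff t g 0)"
    by (rule continuous_at_imp_continuous_on) (use der m0 in \<open>blast intro: DERIV_isCont\<close>)
  have contD: "continuous_on {a..b} (\<lambda>x. Ff t g 0 x - poly P x)"
    by (intro continuous_intros contF)
  have intF: "Ff t g 0 integrable_on {a..b}" using contF integrable_continuous_real by blast
  have intP: "poly P integrable_on {a..b}"
    by (intro integrable_continuous_real continuous_intros)
  have I1: "integral {a..b} (\<lambda>x. Ff t g 0 x - poly P x) = integral {a..b} (Ff t g 0) - integral {a..b} (poly P)"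
    by (rule integral_diff[OF intF intP])
  have B1: "\<bar>integral {a..b} (\<lambda>x. Ff t g 0 x - poly P x)\<bar> \<le> E0 * (b - a)"
    using integral_bound[OF less_imp_le[OF ab] contD, of E0] err by simp
  have B2: "\<bar>\<Sum>k=1..n. w k * (Ff t g 0 (s k) - poly P (s k))\<bar> \<le> E0 * (b - a)"
  proof -
    have "\<bar>\<Sum>k=1..n. w k * (Ff t g 0 (s k) - poly P (s k))\<bar> \<le> (\<Sum>k=1..n. \<bar>w k * (Ff t g 0 (s k) - poly P (s k))\<bar>)"
      by (rule sum_abs)
    also have "\<dots> \<le> (\<Sum>k=1..n. w k * E0)"
    proof (rule sum_mono)
      fix k assume k: "k \<in> {1..n}"
      have wk: "w k > 0" by (rule gl_weight_pos[OF gl ab k])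
      have "\<bar>Ff t g 0 (s k) - poly P (s k)\<bar> \<le> E0" by (rule err[OF gl_node_in[OF gl ab k]])
      then show "\<bar>w k * (Ff t g 0 (s k) - poly P (s k))\<bar> \<le> w k * E0"
        using wk by (simp add: abs_mult mult_left_mono)
    qed
    also have "\<dots> = E0 * (b - a)"
      using gl_weight_sum[OF gl ab] n by (simp add: sum_distrib_right[symmetric])
    finally show ?thesis .
  qed
  have "integral {a..b} (Ff t g 0) - (\<Sum>k=1..n. w k * Ff t g 0 (s k))
      = integral {a..b} (\<lambda>x. Ff t g 0 x - poly P x) - (\<Sum>k=1..n. w k * (Ff t g 0 (s k) - poly P (s k)))"
    by (simp add: I1 exact right_diff_distrib sum_subtractf)
  then have "\<bar>integral {a..b} (Ff t g 0) - (\<Sum>k=1..n. w k * Ff t g 0 (s k))\<bar> \<le> E0 * (b - a) + E0 * (b - a)"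
    using B1 B2 by linarith
  then show ?thesis unfolding E0_def m_def by (simp add: algebra_simps)
qed

lemma const_bound:
  assumes "1 < \<beta>" "n > 1"
  shows "4 < 2 powr (\<beta> - 3/2) * pi * exp (1 / exp 1) ^ (2 * n)"
proof -
  have s2: "sqrt 2 < 3/2"
    by (rule real_less_lsqrt) (auto simp: power2_eq_square)
  have "2 powr (-1/2) = inverse (sqrt 2)"
    by (simp add: powr_minus powr_half_sqrt[symmetric])
  also have "\<dots> > 2/3" using s2 by (simp add: field_simps)
  finally have h1: "2 powr (-1/2) > (2/3::real)" .
  have "2 powr (-1/2) \<le> (2::real) powr (\<beta> - 3/2)"
    using assms by (intro powr_mono) auto
  with h1 have c1: "2 powr (\<beta> - 3/2) > (2/3::real)" by linarith
  have e3: "exp 1 \<le> (3::real)" by (rule exp_le)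
  have "4/3 \<le> 4 / exp (1::real)" using e3 by (simp add: field_simps)
  then have "exp (4/3) \<le> exp (4 / exp (1::real))" by simp
  moreover have "(\<Sum>i\<le>2. (4/3::real)^i / fact i) \<le> exp (4/3)" by (rule exp_partial_le) simp
  moreover have "(\<Sum>i\<le>2. (4/3::real)^i / fact i) > 3" by (simp add: numeral_2_eq_2 fact_numeral)
  ultimately have e43: "exp (4 / exp (1::real)) > 3" by linarith
  have "exp (4 / exp (1::real)) = exp (1 / exp 1) ^ 4"
    using exp_of_nat_mult[of 4 "1 / exp (1::real)"] by simp
  also have "\<dots> \<le> exp (1 / exp 1) ^ (2 * n)"
    using assms by (intro power_increasing) auto
  finally have c3: "exp (1 / exp 1) ^ (2 * n) > (3::real)" using e43 by simp
  have "(2/3) * 2 * 3 < 2 powr (\<beta> - 3/2) * pi * exp (1 / exp 1) ^ (2 * n)"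
    using c1 c3 pi_ge_two
    by (intro mult_strict_mono mult_le_less_imp_less mult_less_le_imp_less) auto
  then show ?thesis by simp
qed

theorem lemma2p3:
  fixes j :: int and n :: nat and s w :: "nat \<Rightarrow> real" and a b \<beta> t :: real
  assumes "a = 2 powi j" and "b = 2 powi (j + 1)"
    and "n > 1"
    and "gauss_legendre a b n s w"
    and "1 < \<beta>" and "\<beta> < 2"
    and "t > 0"
  shows "\<bar>integral {a..b} (\<lambda>x. exp (- t * x) * x powr (\<beta> - 1))
            - (\<Sum>k = 1..n. w k * s k powr (\<beta> - 1) * exp (- s k * t))\<bar>
         < 2 powr (\<beta> - 3/2) * pi * a powr \<beta> * (exp (1 / exp 1) / 4) ^ (2 * n)"
proof -
  define g where "g = \<beta> - 1"
  have a0: "a > 0" using assms(1) by simp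
  have b2: "b = 2 * a" using assms(1,2) by (simp add: power_int_add)
  have g: "0 < g" "g < 1" using assms(5,6) g_def by auto
  have fe: "(\<lambda>x. exp (- t * x) * x powr (\<beta> - 1)) = Ff t g 0"
    by (rule ext) (simp add: Ff_0 g_def)
  have se: "(\<Sum>k = 1..n. w k * s k powr (\<beta> - 1) * exp (- s k * t)) = (\<Sum>k=1..n. w k * Ff t g 0 (s k))"
    by (intro sum.cong refl) (simp add: Ff_0 g_def mult.commute mult.left_commute)
  have C: "\<bar>integral {a..b} (Ff t g 0) - (\<Sum>k=1..n. w k * Ff t g 0 (s k))\<bar>
     \<le> 2 * (b - a) * (a powr (g - real (2*n)) / (2^(2*n-1) * (2/(b-a))^(2*n)))"
    by (rule core[OF a0 b2 assms(3,4) g assms(7)])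
  define N where "N = 2 * n"
  have N1: "N \<ge> 1" using assms(3) N_def by simp
  have p1: "a powr (g - real N) = a powr g / a^N"
    using a0 by (simp add: powr_diff powr_realpow)
  have p2: "(2::real)^(N-1) * 2 = 2^N" using N1 by (metis power_minus_mult not_one_le_zero neq0_conv) 
  have p3: "(2::real)^N * 2^N = 16^n" unfolding N_def by (simp add: power_mult_distrib[symmetric] power_mult)
  have p4: "a * a powr g = a powr \<beta>"
  proof -
    have "a powr \<beta> = a powr (1 + g)" by (simp add: g_def)
    also have "\<dots> = a powr 1 * a powr g" by (rule powr_add)
    finally show ?thesis using a0 by simp
  qed
  have "2 * (b - a) * (a powr (g - real (2*n)) / (2^(2*n-1) * (2/(b-a))^(2*n)))
      = 2 * a * (a powr g / a^N / (2^(N-1) * (2^N / a^N)))"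
    using b2 p1 unfolding N_def by (simp add: power_divide)
  also have "\<dots> = 2 * (a * a powr g) / (2^(N-1) * 2^N)"
    using a0 by (simp add: field_simps)
  also have "\<dots> = 4 * (a * a powr g) / (2^N * 2^N)"
    using p2 by (simp add: field_simps flip: p2)
  also have "\<dots> = 4 * a powr \<beta> / 16^n" using p3 p4 by simp
  finally have C2: "\<bar>integral {a..b} (Ff t g 0) - (\<Sum>k=1..n. w k * Ff t g 0 (s k))\<bar> \<le> 4 * a powr \<beta> / 16^n"
    using C by simp
  have K: "4 < 2 powr (\<beta> - 3/2) * pi * exp (1 / exp 1) ^ (2 * n)"
    by (rule const_bound[OF assms(5,3)])
  have "4 * a powr \<beta> / 16^n < (2 powr (\<beta> - 3/2) * pi * exp (1 / exp 1) ^ (2 * n)) * a powr \<beta> / 16^n"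
    using K a0 by (intro divide_strict_right_mono mult_strict_right_mono) auto
  also have "\<dots> = 2 powr (\<beta> - 3/2) * pi * a powr \<beta> * (exp (1 / exp 1) / 4) ^ (2 * n)"
    by (simp add: power_divide power_mult)
  finally show ?thesis using C2 fe se by simp
qed

end
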